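(* There exist large sets with multiplicity LS$(4,5,11;2)$, LS$(3,4,10;2)$, and LS$(5,6,12;2)$.
   Context: A Steiner system S$(t,k,n)$ is a pair $(Q,B)$ where $Q$ is an $n$-set and $B$ is a collection of $k$-subsets (blocks) of $Q$ such that every $t$-subset of $Q$ is contained in exactly one block. A large set with multiplicity $\mu$, LS$(t,k,n;\mu)$, is a family (the same system may occur more than once) of Steiner systems S$(t,k,n)$ on a common $n$-set $Q$ such that every $k$-subset of $Q$ is a block of exactly $\mu$ of the systems. *)

theory Defs
  imports Main "HOL-Library.Multiset"
begin

definition steiner_system :: "nat \<Rightarrow> nat \<Rightarrow> 'a set \<Rightarrow> 'a set set \<Rightarrow> bool" where
  "steiner_system t k Q B \<longleftrightarrow>
     finite Q \<and>
     (\<forall>b\<in>B. b \<subseteq> Q \<and> card b = k) \<and>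
     (\<forall>T. T \<subseteq> Q \<and> card T = t \<longrightarrow> (\<exists>!b. b \<in> B \<and> T \<subseteq> b))"

definition large_set_mult :: "nat \<Rightarrow> nat \<Rightarrow> nat \<Rightarrow> nat \<Rightarrow> 'a set \<Rightarrow> 'a set set multiset \<Rightarrow> bool" where
  "large_set_mult t k n mu Q L \<longleftrightarrow>
     finite Q \<and> card Q = n \<and>
     (\<forall>B\<in>#L. steiner_system t k Q B) \<and>
     (\<forall>K. K \<subseteq> Q \<and> card K = k \<longrightarrow> size (filter_mset (\<lambda>B. K \<in> B) L) = mu)"

definition LS_exists :: "nat \<Rightarrow> nat \<Rightarrow> nat \<Rightarrow> nat \<Rightarrow> bool" where
  "LS_exists t k n mu \<longleftrightarrow> (\<exists>L. large_set_mult t k n mu {..<n} (L :: nat set set multiset))"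

end

theory Submission
  imports Defs
begin

fun run :: "('r \<Rightarrow> 'a \<Rightarrow> 'a) \<Rightarrow> ('r \<Rightarrow> 'a \<Rightarrow> 'a) \<Rightarrow> 'r list \<Rightarrow> nat set \<Rightarrow> 'a \<Rightarrow> 'a" where
  "run inc exc [] T a = a"
| "run inc exc (r # R) T a = run inc exc R T (if length R \<in> T then inc r a else exc r a)"

fun enum :: "('r \<Rightarrow> 'a \<Rightarrow> 'a) \<Rightarrow> ('r \<Rightarrow> 'a \<Rightarrow> 'a) \<Rightarrow> ('a \<Rightarrow> bool) \<Rightarrow> 'r list \<Rightarrow> nat \<Rightarrow> 'a \<Rightarrow> bool" where
  "enum inc exc P R 0 a = P (run inc exc R {} a)"
| "enum inc exc P [] (Suc k) a = True"
| "enum inc exc P (r # R) (Suc k) a = (enum inc exc P R (Suc k) (exc r a) \<and> enum inc exc P R k (inc r a))"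

lemma run_cong: "(\<And>i. i < length R \<Longrightarrow> (i \<in> T \<longleftrightarrow> i \<in> T')) \<Longrightarrow> run inc exc R T a = run inc exc R T' a"
proof (induction R arbitrary: a)
  case Nil then show ?case by simp
next
  case (Cons r R)
  have "length R \<in> T \<longleftrightarrow> length R \<in> T'" using Cons.prems by simp
  moreover have "run inc exc R T b = run inc exc R T' b" for b
    using Cons.IH[of b] Cons.prems by simp
  ultimately show ?case by simp
qed

lemma enum_correct: "enum inc exc P R k a \<longleftrightarrow> (\<forall>T. T \<subseteq> {..<length R} \<and> card T = k \<longrightarrow> P (run inc exc R T a))"
proof (induction R arbitrary: k a)
  case Nil
  show ?case
  proof (cases k)
    case 0 then show ?thesis by simp
  next
    case (Suc k') then show ?thesis by simp
  qed
next
  case (Cons r R)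
  show ?case
  proof (cases k)
    case 0
    have "T \<subseteq> {..<length (r # R)} \<and> card T = 0 \<longleftrightarrow> T = {}" for T
      using finite_subset[of T "{..<length (r # R)}"] by auto
    then show ?thesis using 0 by simp
  next
    case (Suc k')
    let ?n = "length R"
    have "enum inc exc P (r # R) k a \<longleftrightarrow> enum inc exc P R (Suc k') (exc r a) \<and> enum inc exc P R k' (inc r a)"
      using Suc by simp
    also have "\<dots> \<longleftrightarrow> (\<forall>T. T \<subseteq> {..<?n} \<and> card T = Suc k' \<longrightarrow> P (run inc exc R T (exc r a))) \<and>
        (\<forall>T. T \<subseteq> {..<?n} \<and> card T = k' \<longrightarrow> P (run inc exc R T (inc r a)))"
      using Cons.IH by blast
    also have "\<dots> \<longleftrightarrow> (\<forall>T. T \<subseteq> {..<length (r # R)} \<and> card T = k \<longrightarrow> P (run inc exc (r # R) T a))"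
    proof
      assume AB: "(\<forall>T. T \<subseteq> {..<?n} \<and> card T = Suc k' \<longrightarrow> P (run inc exc R T (exc r a))) \<and>
        (\<forall>T. T \<subseteq> {..<?n} \<and> card T = k' \<longrightarrow> P (run inc exc R T (inc r a)))"
      show "\<forall>T. T \<subseteq> {..<length (r # R)} \<and> card T = k \<longrightarrow> P (run inc exc (r # R) T a)"
      proof (intro allI impI)
        fix T assume T': "T \<subseteq> {..<length (r # R)} \<and> card T = k"
        have T: "T \<subseteq> {..<length (r # R)}" "card T = k" using T' by auto
        show "P (run inc exc (r # R) T a)"
        proof (cases "?n \<in> T")
          case True
          have fin: "finite T" using T(1) finite_subset by blast
          have "T - {?n} \<subseteq> {..<?n}" using T(1) by auto
          moreover have "card (T - {?n}) = k'" using T(2) True fin Suc by simp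
          ultimately have "P (run inc exc R (T - {?n}) (inc r a))" using AB by blast
          moreover have "run inc exc R (T - {?n}) (inc r a) = run inc exc R T (inc r a)"
            by (rule run_cong) auto
          ultimately show ?thesis using True by simp
        next
          case False
          have "T \<subseteq> {..<?n}" using T(1) False by (auto simp: less_Suc_eq)
          then show ?thesis using AB T(2) Suc False by simp
        qed
      qed
    next
      assume C: "\<forall>T. T \<subseteq> {..<length (r # R)} \<and> card T = k \<longrightarrow> P (run inc exc (r # R) T a)"
      show "(\<forall>T. T \<subseteq> {..<?n} \<and> card T = Suc k' \<longrightarrow> P (run inc exc R T (exc r a))) \<and>
        (\<forall>T. T \<subseteq> {..<?n} \<and> card T = k' \<longrightarrow> P (run inc exc R T (inc r a)))"
      proof (intro conjI allI impI)
        fix T assume T': "T \<subseteq> {..<?n} \<and> card T = Suc k'"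
        have T: "T \<subseteq> {..<?n}" "card T = Suc k'" using T' by auto
        have "?n \<notin> T" using T by auto
        moreover have "T \<subseteq> {..<length (r # R)}" using T by auto
        ultimately have "P (run inc exc (r # R) T a)" using C T Suc by blast
        then show "P (run inc exc R T (exc r a))" using \<open>?n \<notin> T\<close> by simp
      next
        fix T assume T': "T \<subseteq> {..<?n} \<and> card T = k'"
        have T: "T \<subseteq> {..<?n}" "card T = k'" using T' by auto
        have fin: "finite T" using T(1) finite_subset by blast
        have nT: "?n \<notin> T" using T by auto
        have "insert ?n T \<subseteq> {..<length (r # R)}" using T by auto
        moreover have "card (insert ?n T) = k" using T fin nT Suc by simp
        ultimately have "P (run inc exc (r # R) (insert ?n T) a)" using C by blast
        moreover have "run inc exc R (insert ?n T) (inc r a) = run inc exc R T (inc r a)"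
          by (rule run_cong) auto
        ultimately show "P (run inc exc R T (inc r a))" by simp
      qed
    qed
    finally show ?thesis .
  qed
qed

lemma enum_Cons_if: "enum inc exc P (r # R) k a = (if k = 0 then P (run inc exc (r # R) {} a) else
   (enum inc exc P R k (exc r a) \<and> enum inc exc P R (k - 1) (inc r a)))"
  by (cases k) auto
lemma enum_Nil_if: "enum inc exc P [] k a = (k = 0 \<longrightarrow> P a)"
  by (cases k) auto
definition mB1 :: "nat \<Rightarrow> bool" where "mB1 c = (if c < 4221 then False else if c = 4221 then True else False)"
definition mB2 :: "nat \<Rightarrow> bool" where "mB2 c = (if c < 4279 then mB1 c else if c = 4279 then True else False)"
definition mB3 :: "nat \<Rightarrow> bool" where "mB3 c = (if c < 4346 then False else if c = 4346 then True else False)"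
definition mB4 :: "nat \<Rightarrow> bool" where "mB4 c = (if c < 4303 then mB2 c else if c = 4303 then True else mB3 c)"
definition mB5 :: "nat \<Rightarrow> bool" where "mB5 c = (if c < 4439 then False else if c = 4439 then True else False)"
definition mB6 :: "nat \<Rightarrow> bool" where "mB6 c = (if c < 4510 then False else if c = 4510 then True else False)"
definition mB7 :: "nat \<Rightarrow> bool" where "mB7 c = (if c < 4462 then mB5 c else if c = 4462 then True else mB6 c)"
definition mB8 :: "nat \<Rightarrow> bool" where "mB8 c = (if c < 4411 then mB4 c else if c = 4411 then True else mB7 c)"
definition mB9 :: "nat \<Rightarrow> bool" where "mB9 c = (if c < 4569 then False else if c = 4569 then True else False)"
definition mB10 :: "nat \<Rightarrow> bool" where "mB10 c = (if c < 4596 then False else if c = 4596 then True else False)"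
definition mB11 :: "nat \<Rightarrow> bool" where "mB11 c = (if c < 4579 then mB9 c else if c = 4579 then True else mB10 c)"
definition mB12 :: "nat \<Rightarrow> bool" where "mB12 c = (if c < 4715 then False else if c = 4715 then True else False)"
definition mB13 :: "nat \<Rightarrow> bool" where "mB13 c = (if c < 4782 then False else if c = 4782 then True else False)"
definition mB14 :: "nat \<Rightarrow> bool" where "mB14 c = (if c < 4726 then mB12 c else if c = 4726 then True else mB13 c)"
definition mB15 :: "nat \<Rightarrow> bool" where "mB15 c = (if c < 4639 then mB11 c else if c = 4639 then True else mB14 c)"
definition mB16 :: "nat \<Rightarrow> bool" where "mB16 c = (if c < 4525 then mB8 c else if c = 4525 then True else mB15 c)"
definition mB17 :: "nat \<Rightarrow> bool" where "mB17 c = (if c < 4819 then False else if c = 4819 then True else False)"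
definition mB18 :: "nat \<Rightarrow> bool" where "mB18 c = (if c < 4828 then mB17 c else if c = 4828 then True else False)"
definition mB19 :: "nat \<Rightarrow> bool" where "mB19 c = (if c < 4903 then False else if c = 4903 then True else False)"
definition mB20 :: "nat \<Rightarrow> bool" where "mB20 c = (if c < 4837 then mB18 c else if c = 4837 then True else mB19 c)"
definition mB21 :: "nat \<Rightarrow> bool" where "mB21 c = (if c < 4941 then False else if c = 4941 then True else False)"
definition mB22 :: "nat \<Rightarrow> bool" where "mB22 c = (if c < 4977 then False else if c = 4977 then True else False)"
definition mB23 :: "nat \<Rightarrow> bool" where "mB23 c = (if c < 4954 then mB21 c else if c = 4954 then True else mB22 c)"
definition mB24 :: "nat \<Rightarrow> bool" where "mB24 c = (if c < 4924 then mB20 c else if c = 4924 then True else mB23 c)"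
definition mB25 :: "nat \<Rightarrow> bool" where "mB25 c = (if c < 5013 then False else if c = 5013 then True else False)"
definition mB26 :: "nat \<Rightarrow> bool" where "mB26 c = (if c < 5062 then False else if c = 5062 then True else False)"
definition mB27 :: "nat \<Rightarrow> bool" where "mB27 c = (if c < 5042 then mB25 c else if c = 5042 then True else mB26 c)"
definition mB28 :: "nat \<Rightarrow> bool" where "mB28 c = (if c < 5182 then False else if c = 5182 then True else False)"
definition mB29 :: "nat \<Rightarrow> bool" where "mB29 c = (if c < 5223 then False else if c = 5223 then True else False)"
definition mB30 :: "nat \<Rightarrow> bool" where "mB30 c = (if c < 5211 then mB28 c else if c = 5211 then True else mB29 c)"
definition mB31 :: "nat \<Rightarrow> bool" where "mB31 c = (if c < 5096 then mB27 c else if c = 5096 then True else mB30 c)"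
definition mB32 :: "nat \<Rightarrow> bool" where "mB32 c = (if c < 5003 then mB24 c else if c = 5003 then True else mB31 c)"
definition mB33 :: "nat \<Rightarrow> bool" where "mB33 c = (if c < 4793 then mB16 c else if c = 4793 then True else mB32 c)"
definition mB34 :: "nat \<Rightarrow> bool" where "mB34 c = (if c < 5291 then False else if c = 5291 then True else False)"
definition mB35 :: "nat \<Rightarrow> bool" where "mB35 c = (if c < 5334 then mB34 c else if c = 5334 then True else False)"
definition mB36 :: "nat \<Rightarrow> bool" where "mB36 c = (if c < 5361 then False else if c = 5361 then True else False)"
definition mB37 :: "nat \<Rightarrow> bool" where "mB37 c = (if c < 5356 then mB35 c else if c = 5356 then True else mB36 c)"
definition mB38 :: "nat \<Rightarrow> bool" where "mB38 c = (if c < 5429 then False else if c = 5429 then True else False)"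
definition mB39 :: "nat \<Rightarrow> bool" where "mB39 c = (if c < 5481 then False else if c = 5481 then True else False)"
definition mB40 :: "nat \<Rightarrow> bool" where "mB40 c = (if c < 5468 then mB38 c else if c = 5468 then True else mB39 c)"
definition mB41 :: "nat \<Rightarrow> bool" where "mB41 c = (if c < 5391 then mB37 c else if c = 5391 then True else mB40 c)"
definition mB42 :: "nat \<Rightarrow> bool" where "mB42 c = (if c < 5523 then False else if c = 5523 then True else False)"
definition mB43 :: "nat \<Rightarrow> bool" where "mB43 c = (if c < 5560 then False else if c = 5560 then True else False)"
definition mB44 :: "nat \<Rightarrow> bool" where "mB44 c = (if c < 5542 then mB42 c else if c = 5542 then True else mB43 c)"
definition mB45 :: "nat \<Rightarrow> bool" where "mB45 c = (if c < 5578 then False else if c = 5578 then True else False)"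
definition mB46 :: "nat \<Rightarrow> bool" where "mB46 c = (if c < 5683 then False else if c = 5683 then True else False)"
definition mB47 :: "nat \<Rightarrow> bool" where "mB47 c = (if c < 5677 then mB45 c else if c = 5677 then True else mB46 c)"
definition mB48 :: "nat \<Rightarrow> bool" where "mB48 c = (if c < 5573 then mB44 c else if c = 5573 then True else mB47 c)"
definition mB49 :: "nat \<Rightarrow> bool" where "mB49 c = (if c < 5490 then mB41 c else if c = 5490 then True else mB48 c)"
definition mB50 :: "nat \<Rightarrow> bool" where "mB50 c = (if c < 5717 then False else if c = 5717 then True else False)"
definition mB51 :: "nat \<Rightarrow> bool" where "mB51 c = (if c < 5767 then False else if c = 5767 then True else False)"
definition mB52 :: "nat \<Rightarrow> bool" where "mB52 c = (if c < 5752 then mB50 c else if c = 5752 then True else mB51 c)"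
definition mB53 :: "nat \<Rightarrow> bool" where "mB53 c = (if c < 5812 then False else if c = 5812 then True else False)"
definition mB54 :: "nat \<Rightarrow> bool" where "mB54 c = (if c < 5858 then False else if c = 5858 then True else False)"
definition mB55 :: "nat \<Rightarrow> bool" where "mB55 c = (if c < 5833 then mB53 c else if c = 5833 then True else mB54 c)"
definition mB56 :: "nat \<Rightarrow> bool" where "mB56 c = (if c < 5786 then mB52 c else if c = 5786 then True else mB55 c)"
definition mB57 :: "nat \<Rightarrow> bool" where "mB57 c = (if c < 5913 then False else if c = 5913 then True else False)"
definition mB58 :: "nat \<Rightarrow> bool" where "mB58 c = (if c < 5955 then False else if c = 5955 then True else False)"
definition mB59 :: "nat \<Rightarrow> bool" where "mB59 c = (if c < 5930 then mB57 c else if c = 5930 then True else mB58 c)"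
definition mB60 :: "nat \<Rightarrow> bool" where "mB60 c = (if c < 6028 then False else if c = 6028 then True else False)"
definition mB61 :: "nat \<Rightarrow> bool" where "mB61 c = (if c < 6096 then False else if c = 6096 then True else False)"
definition mB62 :: "nat \<Rightarrow> bool" where "mB62 c = (if c < 6049 then mB60 c else if c = 6049 then True else mB61 c)"
definition mB63 :: "nat \<Rightarrow> bool" where "mB63 c = (if c < 5988 then mB59 c else if c = 5988 then True else mB62 c)"
definition mB64 :: "nat \<Rightarrow> bool" where "mB64 c = (if c < 5910 then mB56 c else if c = 5910 then True else mB63 c)"
definition mB65 :: "nat \<Rightarrow> bool" where "mB65 c = (if c < 5710 then mB49 c else if c = 5710 then True else mB64 c)"
definition mB66 :: "nat \<Rightarrow> bool" where "mB66 c = (if c < 5277 then mB33 c else if c = 5277 then True else mB65 c)"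
definition mB67 :: "nat \<Rightarrow> bool" where "mB67 c = (if c < 6238 then False else if c = 6238 then True else False)"
definition mB68 :: "nat \<Rightarrow> bool" where "mB68 c = (if c < 6259 then mB67 c else if c = 6259 then True else False)"
definition mB69 :: "nat \<Rightarrow> bool" where "mB69 c = (if c < 6332 then False else if c = 6332 then True else False)"
definition mB70 :: "nat \<Rightarrow> bool" where "mB70 c = (if c < 6299 then mB68 c else if c = 6299 then True else mB69 c)"
definition mB71 :: "nat \<Rightarrow> bool" where "mB71 c = (if c < 6374 then False else if c = 6374 then True else False)"
definition mB72 :: "nat \<Rightarrow> bool" where "mB72 c = (if c < 6429 then False else if c = 6429 then True else False)"
definition mB73 :: "nat \<Rightarrow> bool" where "mB73 c = (if c < 6377 then mB71 c else if c = 6377 then True else mB72 c)"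
definition mB74 :: "nat \<Rightarrow> bool" where "mB74 c = (if c < 6357 then mB70 c else if c = 6357 then True else mB73 c)"
definition mB75 :: "nat \<Rightarrow> bool" where "mB75 c = (if c < 6475 then False else if c = 6475 then True else False)"
definition mB76 :: "nat \<Rightarrow> bool" where "mB76 c = (if c < 6520 then False else if c = 6520 then True else False)"
definition mB77 :: "nat \<Rightarrow> bool" where "mB77 c = (if c < 6501 then mB75 c else if c = 6501 then True else mB76 c)"
definition mB78 :: "nat \<Rightarrow> bool" where "mB78 c = (if c < 6570 then False else if c = 6570 then True else False)"
definition mB79 :: "nat \<Rightarrow> bool" where "mB79 c = (if c < 6604 then False else if c = 6604 then True else False)"
definition mB80 :: "nat \<Rightarrow> bool" where "mB80 c = (if c < 6577 then mB78 c else if c = 6577 then True else mB79 c)"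
definition mB81 :: "nat \<Rightarrow> bool" where "mB81 c = (if c < 6535 then mB77 c else if c = 6535 then True else mB80 c)"
definition mB82 :: "nat \<Rightarrow> bool" where "mB82 c = (if c < 6454 then mB74 c else if c = 6454 then True else mB81 c)"
definition mB83 :: "nat \<Rightarrow> bool" where "mB83 c = (if c < 6709 then False else if c = 6709 then True else False)"
definition mB84 :: "nat \<Rightarrow> bool" where "mB84 c = (if c < 6727 then False else if c = 6727 then True else False)"
definition mB85 :: "nat \<Rightarrow> bool" where "mB85 c = (if c < 6714 then mB83 c else if c = 6714 then True else mB84 c)"
definition mB86 :: "nat \<Rightarrow> bool" where "mB86 c = (if c < 6764 then False else if c = 6764 then True else False)"
definition mB87 :: "nat \<Rightarrow> bool" where "mB87 c = (if c < 6806 then False else if c = 6806 then True else False)"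
definition mB88 :: "nat \<Rightarrow> bool" where "mB88 c = (if c < 6797 then mB86 c else if c = 6797 then True else mB87 c)"
definition mB89 :: "nat \<Rightarrow> bool" where "mB89 c = (if c < 6745 then mB85 c else if c = 6745 then True else mB88 c)"
definition mB90 :: "nat \<Rightarrow> bool" where "mB90 c = (if c < 6858 then False else if c = 6858 then True else False)"
definition mB91 :: "nat \<Rightarrow> bool" where "mB91 c = (if c < 6926 then False else if c = 6926 then True else False)"
definition mB92 :: "nat \<Rightarrow> bool" where "mB92 c = (if c < 6896 then mB90 c else if c = 6896 then True else mB91 c)"
definition mB93 :: "nat \<Rightarrow> bool" where "mB93 c = (if c < 6953 then False else if c = 6953 then True else False)"
definition mB94 :: "nat \<Rightarrow> bool" where "mB94 c = (if c < 7010 then False else if c = 7010 then True else False)"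
definition mB95 :: "nat \<Rightarrow> bool" where "mB95 c = (if c < 6996 then mB93 c else if c = 6996 then True else mB94 c)"
definition mB96 :: "nat \<Rightarrow> bool" where "mB96 c = (if c < 6931 then mB92 c else if c = 6931 then True else mB95 c)"
definition mB97 :: "nat \<Rightarrow> bool" where "mB97 c = (if c < 6819 then mB89 c else if c = 6819 then True else mB96 c)"
definition mB98 :: "nat \<Rightarrow> bool" where "mB98 c = (if c < 6610 then mB82 c else if c = 6610 then True else mB97 c)"
definition mB99 :: "nat \<Rightarrow> bool" where "mB99 c = (if c < 7076 then False else if c = 7076 then True else False)"
definition mB100 :: "nat \<Rightarrow> bool" where "mB100 c = (if c < 7105 then mB99 c else if c = 7105 then True else False)"
definition mB101 :: "nat \<Rightarrow> bool" where "mB101 c = (if c < 7225 then False else if c = 7225 then True else False)"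
definition mB102 :: "nat \<Rightarrow> bool" where "mB102 c = (if c < 7191 then mB100 c else if c = 7191 then True else mB101 c)"
definition mB103 :: "nat \<Rightarrow> bool" where "mB103 c = (if c < 7274 then False else if c = 7274 then True else False)"
definition mB104 :: "nat \<Rightarrow> bool" where "mB104 c = (if c < 7310 then False else if c = 7310 then True else False)"
definition mB105 :: "nat \<Rightarrow> bool" where "mB105 c = (if c < 7284 then mB103 c else if c = 7284 then True else mB104 c)"
definition mB106 :: "nat \<Rightarrow> bool" where "mB106 c = (if c < 7245 then mB102 c else if c = 7245 then True else mB105 c)"
definition mB107 :: "nat \<Rightarrow> bool" where "mB107 c = (if c < 7346 then False else if c = 7346 then True else False)"
definition mB108 :: "nat \<Rightarrow> bool" where "mB108 c = (if c < 7384 then False else if c = 7384 then True else False)"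
definition mB109 :: "nat \<Rightarrow> bool" where "mB109 c = (if c < 7363 then mB107 c else if c = 7363 then True else mB108 c)"
definition mB110 :: "nat \<Rightarrow> bool" where "mB110 c = (if c < 7459 then False else if c = 7459 then True else False)"
definition mB111 :: "nat \<Rightarrow> bool" where "mB111 c = (if c < 7494 then False else if c = 7494 then True else False)"
definition mB112 :: "nat \<Rightarrow> bool" where "mB112 c = (if c < 7468 then mB110 c else if c = 7468 then True else mB111 c)"
definition mB113 :: "nat \<Rightarrow> bool" where "mB113 c = (if c < 7450 then mB109 c else if c = 7450 then True else mB112 c)"
definition mB114 :: "nat \<Rightarrow> bool" where "mB114 c = (if c < 7333 then mB106 c else if c = 7333 then True else mB113 c)"
definition mB115 :: "nat \<Rightarrow> bool" where "mB115 c = (if c < 7561 then False else if c = 7561 then True else False)"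
definition mB116 :: "nat \<Rightarrow> bool" where "mB116 c = (if c < 7648 then False else if c = 7648 then True else False)"
definition mB117 :: "nat \<Rightarrow> bool" where "mB117 c = (if c < 7572 then mB115 c else if c = 7572 then True else mB116 c)"
definition mB118 :: "nat \<Rightarrow> bool" where "mB118 c = (if c < 7708 then False else if c = 7708 then True else False)"
definition mB119 :: "nat \<Rightarrow> bool" where "mB119 c = (if c < 7762 then False else if c = 7762 then True else False)"
definition mB120 :: "nat \<Rightarrow> bool" where "mB120 c = (if c < 7718 then mB118 c else if c = 7718 then True else mB119 c)"
definition mB121 :: "nat \<Rightarrow> bool" where "mB121 c = (if c < 7691 then mB117 c else if c = 7691 then True else mB120 c)"
definition mB122 :: "nat \<Rightarrow> bool" where "mB122 c = (if c < 7825 then False else if c = 7825 then True else False)"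
definition mB123 :: "nat \<Rightarrow> bool" where "mB123 c = (if c < 7876 then False else if c = 7876 then True else False)"
definition mB124 :: "nat \<Rightarrow> bool" where "mB124 c = (if c < 7848 then mB122 c else if c = 7848 then True else mB123 c)"
definition mB125 :: "nat \<Rightarrow> bool" where "mB125 c = (if c < 7984 then False else if c = 7984 then True else False)"
definition mB126 :: "nat \<Rightarrow> bool" where "mB126 c = (if c < 8066 then False else if c = 8066 then True else False)"
definition mB127 :: "nat \<Rightarrow> bool" where "mB127 c = (if c < 8008 then mB125 c else if c = 8008 then True else mB126 c)"
definition mB128 :: "nat \<Rightarrow> bool" where "mB128 c = (if c < 7941 then mB124 c else if c = 7941 then True else mB127 c)"
definition mB129 :: "nat \<Rightarrow> bool" where "mB129 c = (if c < 7777 then mB121 c else if c = 7777 then True else mB128 c)"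
definition mB130 :: "nat \<Rightarrow> bool" where "mB130 c = (if c < 7505 then mB114 c else if c = 7505 then True else mB129 c)"
definition mB131 :: "nat \<Rightarrow> bool" where "mB131 c = (if c < 7064 then mB98 c else if c = 7064 then True else mB130 c)"
definition mB132 :: "nat \<Rightarrow> bool" where "mB132 c = (if c < 6191 then mB66 c else if c = 6191 then True else mB131 c)"
lemmas mB_defs = mB1_def mB2_def mB3_def mB4_def mB5_def mB6_def mB7_def mB8_def mB9_def mB10_def mB11_def mB12_def mB13_def mB14_def mB15_def mB16_def mB17_def mB18_def mB19_def mB20_def mB21_def mB22_def mB23_def mB24_def mB25_def mB26_def mB27_def mB28_def mB29_def mB30_def mB31_def mB32_def mB33_def mB34_def mB35_def mB36_def mB37_def mB38_def mB39_def mB40_def mB41_def mB42_def mB43_def mB44_def mB45_def mB46_def mB47_def mB48_def mB49_def mB50_def mB51_def mB52_def mB53_def mB54_def mB55_def mB56_def mB57_def mB58_def mB59_def mB60_def mB61_def mB62_def mB63_def mB64_def mB65_def mB66_def mB67_def mB68_def mB69_def mB70_def mB71_def mB72_def mB73_def mB74_def mB75_def mB76_def mB77_def mB78_def mB79_def mB80_def mB81_def mB82_def mB83_def mB84_def mB85_def mB86_def mB87_def mB88_def mB89_def mB90_def mB91_def mB92_def mB93_def mB94_def mB95_def mB96_def mB97_def mB98_def mB99_def mB100_def mB101_def mB102_def mB103_def mB104_def mB105_def mB106_def mB107_def mB108_def mB109_def mB110_def mB111_def mB112_def mB113_def mB114_def mB115_def mB116_def mB117_def mB118_def mB119_def mB120_def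 mB121_def mB122_def mB123_def mB124_def mB125_def mB126_def mB127_def mB128_def mB129_def mB130_def mB131_def mB132_def
definition inB :: "nat \<Rightarrow> bool" where "inB c = mB132 c"
definition taul :: "nat list list" where "taul = [[1,0,3,2,4,5,6,9,7,8,10,11], [0,2,1,4,3,5,6,7,10,8,9,11], [0,2,3,4,5,6,1,8,10,7,9,11], [1,2,4,0,5,3,6,7,8,9,11,10], [2,0,1,3,5,4,7,6,8,9,10,11], [0,3,1,4,2,5,6,7,8,9,11,10], [0,1,4,2,3,5,7,6,9,8,10,11], [0,1,2,5,3,4,6,8,7,10,9,11], [0,3,2,1,4,6,7,5,9,8,10,11], [1,0,2,3,4,7,5,6,8,10,9,11], [1,0,2,5,4,7,3,8,6,9,11,10], [0,1,2,3,4,5,6,7,8,9,10,11], [1,2,0,3,4,5,9,6,7,10,11,8], [1,2,0,3,4,5,9,6,7,10,11,8]]"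
definition R5 :: "nat list" where "R5 = [2048,1024,512,256,128,64,32,16,8,4,2,1]"

definition inc5 :: "nat \<Rightarrow> nat \<times> nat list \<Rightarrow> nat \<times> nat list" where "inc5 r a = (fst a + r, snd a)"
definition exc5 :: "nat \<Rightarrow> nat \<times> nat list \<Rightarrow> nat \<times> nat list" where "exc5 r a = (fst a, r # snd a)"
definition P5 :: "nat \<times> nat list \<Rightarrow> bool" where "P5 a = (length (filter (\<lambda>p. inB (fst a + p)) (snd a)) = 1)"
definition inc6 :: "nat list \<Rightarrow> nat list \<Rightarrow> nat list" where "inc6 r cs = map2 (+) cs r"
definition exc6 :: "nat list \<Rightarrow> nat list \<Rightarrow> nat list" where "exc6 r cs = cs"
definition P6 :: "nat list \<Rightarrow> bool" where "P6 cs = (length (filter inB cs) = 2)"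
definition rw0 :: "nat list" where "rw0 = [2,1,1,2,4,1,1,1,1,2,2,1,2,2]"
definition rw1 :: "nat list" where "rw1 = [1,4,4,4,1,8,2,2,8,1,1,2,4,4]"
definition rw2 :: "nat list" where "rw2 = [8,2,8,16,2,2,16,4,4,4,4,4,1,1]"
definition rw3 :: "nat list" where "rw3 = [4,16,16,1,8,16,4,32,2,8,32,8,8,8]"
definition rw4 :: "nat list" where "rw4 = [16,8,32,32,32,4,8,8,16,16,16,16,16,16]"
definition rw5 :: "nat list" where "rw5 = [32,32,64,8,16,32,32,16,64,128,128,32,32,32]"
definition rw6 :: "nat list" where "rw6 = [64,64,2,64,128,64,128,64,128,32,8,64,512,512]"
definition rw7 :: "nat list" where "rw7 = [512,128,256,128,64,128,64,256,32,64,256,128,64,64]"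
definition rw8 :: "nat list" where "rw8 = [128,1024,1024,256,256,256,512,128,512,256,64,256,128,128]"
definition rw9 :: "nat list" where "rw9 = [256,256,128,512,512,512,256,1024,256,1024,512,512,1024,1024]"
definition rw10 :: "nat list" where "rw10 = [1024,512,512,2048,1024,2048,1024,512,1024,512,2048,1024,2048,2048]"
definition rw11 :: "nat list" where "rw11 = [2048,2048,2048,1024,2048,1024,2048,2048,2048,2048,1024,2048,256,256]"
lemmas rw_defs = rw0_def rw1_def rw2_def rw3_def rw4_def rw5_def rw6_def rw7_def rw8_def rw9_def rw10_def rw11_def
definition RR0 :: "nat list list" where "RR0 = []"
definition RR1 :: "nat list list" where "RR1 = rw0 # RR0"
definition RR2 :: "nat list list" where "RR2 = rw1 # RR1"
definition RR3 :: "nat list list" where "RR3 = rw2 # RR2"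
definition RR4 :: "nat list list" where "RR4 = rw3 # RR3"
definition RR5 :: "nat list list" where "RR5 = rw4 # RR4"
definition RR6 :: "nat list list" where "RR6 = rw5 # RR5"
definition RR7 :: "nat list list" where "RR7 = rw6 # RR6"
definition RR8 :: "nat list list" where "RR8 = rw7 # RR7"
definition RR9 :: "nat list list" where "RR9 = rw8 # RR8"
definition RR10 :: "nat list list" where "RR10 = rw9 # RR9"
definition RR11 :: "nat list list" where "RR11 = rw10 # RR10"
definition RR12 :: "nat list list" where "RR12 = rw11 # RR11"
lemma enum_RR1: "enum inc exc P RR1 k a = (if k = 0 then P (run inc exc RR1 {} a) else
   (enum inc exc P RR0 k (exc rw0 a) \<and> enum inc exc P RR0 (k - 1) (inc rw0 a)))"
  unfolding RR1_def by (rule enum_Cons_if)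
lemma enum_RR2: "enum inc exc P RR2 k a = (if k = 0 then P (run inc exc RR2 {} a) else
   (enum inc exc P RR1 k (exc rw1 a) \<and> enum inc exc P RR1 (k - 1) (inc rw1 a)))"
  unfolding RR2_def by (rule enum_Cons_if)
lemma enum_RR3: "enum inc exc P RR3 k a = (if k = 0 then P (run inc exc RR3 {} a) else
   (enum inc exc P RR2 k (exc rw2 a) \<and> enum inc exc P RR2 (k - 1) (inc rw2 a)))"
  unfolding RR3_def by (rule enum_Cons_if)
lemma enum_RR4: "enum inc exc P RR4 k a = (if k = 0 then P (run inc exc RR4 {} a) else
   (enum inc exc P RR3 k (exc rw3 a) \<and> enum inc exc P RR3 (k - 1) (inc rw3 a)))"
  unfolding RR4_def by (rule enum_Cons_if)
lemma enum_RR5: "enum inc exc P RR5 k a = (if k = 0 then P (run inc exc RR5 {} a) else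
   (enum inc exc P RR4 k (exc rw4 a) \<and> enum inc exc P RR4 (k - 1) (inc rw4 a)))"
  unfolding RR5_def by (rule enum_Cons_if)
lemma enum_RR6: "enum inc exc P RR6 k a = (if k = 0 then P (run inc exc RR6 {} a) else
   (enum inc exc P RR5 k (exc rw5 a) \<and> enum inc exc P RR5 (k - 1) (inc rw5 a)))"
  unfolding RR6_def by (rule enum_Cons_if)
lemma enum_RR7: "enum inc exc P RR7 k a = (if k = 0 then P (run inc exc RR7 {} a) else
   (enum inc exc P RR6 k (exc rw6 a) \<and> enum inc exc P RR6 (k - 1) (inc rw6 a)))"
  unfolding RR7_def by (rule enum_Cons_if)
lemma enum_RR8: "enum inc exc P RR8 k a = (if k = 0 then P (run inc exc RR8 {} a) else
   (enum inc exc P RR7 k (exc rw7 a) \<and> enum inc exc P RR7 (k - 1) (inc rw7 a)))"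
  unfolding RR8_def by (rule enum_Cons_if)
lemma enum_RR9: "enum inc exc P RR9 k a = (if k = 0 then P (run inc exc RR9 {} a) else
   (enum inc exc P RR8 k (exc rw8 a) \<and> enum inc exc P RR8 (k - 1) (inc rw8 a)))"
  unfolding RR9_def by (rule enum_Cons_if)
lemma enum_RR10: "enum inc exc P RR10 k a = (if k = 0 then P (run inc exc RR10 {} a) else
   (enum inc exc P RR9 k (exc rw9 a) \<and> enum inc exc P RR9 (k - 1) (inc rw9 a)))"
  unfolding RR10_def by (rule enum_Cons_if)
lemma enum_RR11: "enum inc exc P RR11 k a = (if k = 0 then P (run inc exc RR11 {} a) else
   (enum inc exc P RR10 k (exc rw10 a) \<and> enum inc exc P RR10 (k - 1) (inc rw10 a)))"
  unfolding RR11_def by (rule enum_Cons_if)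
lemma enum_RR12: "enum inc exc P RR12 k a = (if k = 0 then P (run inc exc RR12 {} a) else
   (enum inc exc P RR11 k (exc rw11 a) \<and> enum inc exc P RR11 (k - 1) (inc rw11 a)))"
  unfolding RR12_def by (rule enum_Cons_if)
lemma enum_RR0: "enum inc exc P RR0 k a = (k = 0 \<longrightarrow> P a)" unfolding RR0_def by (rule enum_Nil_if)
lemmas enum_RR = enum_RR0 enum_RR1 enum_RR2 enum_RR3 enum_RR4 enum_RR5 enum_RR6 enum_RR7 enum_RR8 enum_RR9 enum_RR10 enum_RR11 enum_RR12
lemma run_exc6: "run inc6 exc6 R {} a = a"
  by (induction R arbitrary: a) (simp_all add: exc6_def)
lemma comp5: "enum inc5 exc5 P5 R5 5 (4096, [])"
  by (simp add: R5_def enum_Cons_if enum_Nil_if inc5_def exc5_def P5_def inB_def mB_defs cong: if_weak_cong del: enum.simps)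
lemma comp6a: "enum inc6 exc6 P6 RR11 6 [4096,4096,4096,4096,4096,4096,4096,4096,4096,4096,4096,4096,4096,4096]"
  by (simp add: enum_RR run_exc6 inc6_def exc6_def P6_def inB_def mB_defs rw_defs cong: if_weak_cong del: enum.simps)
lemma comp6b: "enum inc6 exc6 P6 RR11 5 (inc6 rw11 [4096,4096,4096,4096,4096,4096,4096,4096,4096,4096,4096,4096,4096,4096])"
  by (simp add: enum_RR run_exc6 inc6_def exc6_def P6_def inB_def mB_defs rw_defs cong: if_weak_cong del: enum.simps)
lemma comp6: "enum inc6 exc6 P6 RR12 6 [4096,4096,4096,4096,4096,4096,4096,4096,4096,4096,4096,4096,4096,4096]"
  unfolding enum_RR12 using comp6a comp6b by (simp add: exc6_def)
lemma R5_eq: "R5 = map (\<lambda>i. 2^i) (rev [0..<12])"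
  by (simp add: R5_def upt_rec)

definition code :: "nat set \<Rightarrow> nat" where "code S = (\<Sum>x\<in>S. 2^x)"
definition B0 :: "nat set set" where "B0 = {b. b \<subseteq> {..<12} \<and> card b = 6 \<and> inB (4096 + code b)}"

lemma run5: "run inc5 exc5 (map (\<lambda>i. 2^i) (rev [0..<n])) T (c, os) =
  (c + (\<Sum>i\<in>T \<inter> {..<n}. 2^i), map (\<lambda>i. 2^i) (filter (\<lambda>i. i \<notin> T) [0..<n]) @ os)"
proof (induction n arbitrary: c os)
  case 0 show ?case by simp
next
  case (Suc n)
  have e: "map (\<lambda>i. 2^i) (rev [0..<Suc n]) = 2^n # map (\<lambda>i. (2::nat)^i) (rev [0..<n])" by simp
  have l: "length (map (\<lambda>i. (2::nat)^i) (rev [0..<n])) = n" by simp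
  show ?case
  proof (cases "n \<in> T")
    case True
    have "T \<inter> {..<Suc n} = insert n (T \<inter> {..<n})" using True by (auto simp: lessThan_Suc)
    then have s: "(\<Sum>i\<in>T \<inter> {..<Suc n}. (2::nat)^i) = 2^n + (\<Sum>i\<in>T \<inter> {..<n}. 2^i)" by simp
    show ?thesis unfolding e using True Suc.IH by (simp add: l inc5_def s add.assoc)
  next
    case False
    have "T \<inter> {..<Suc n} = T \<inter> {..<n}" using False by (auto simp: less_Suc_eq)
    then show ?thesis unfolding e using False Suc.IH by (simp add: l exc5_def)
  qed
qed

lemma code_insert: "finite T \<Longrightarrow> i \<notin> T \<Longrightarrow> code (insert i T) = 2^i + code T"
  by (simp add: code_def)

lemma B0_steiner: "steiner_system 5 6 {..<12} B0"
  unfolding steiner_system_def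
proof (intro conjI ballI allI impI)
  show "finite {..<12::nat}" by simp
next
  fix b assume "b \<in> B0" then show "b \<subseteq> {..<12}" by (simp add: B0_def)
next
  fix b assume "b \<in> B0" then show "card b = 6" by (simp add: B0_def)
next
  fix T :: "nat set" assume T': "T \<subseteq> {..<12} \<and> card T = 5"
  have T: "T \<subseteq> {..<12}" "card T = 5" using T' by auto
  have fin: "finite T" using T(1) finite_subset by blast
  have lR: "length R5 = 12" by (simp add: R5_def)
  have "P5 (run inc5 exc5 R5 T (4096, []))"
    using comp5 T unfolding enum_correct lR by blast
  moreover have TT: "T \<inter> {..<12} = T" using T by auto
  moreover have "run inc5 exc5 R5 T (4096, []) = (4096 + code T, map (\<lambda>i. 2^i) (filter (\<lambda>i. i \<notin> T) [0..<12]))"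
    unfolding R5_eq run5 code_def TT by simp
  ultimately have "length (filter (\<lambda>p. inB (4096 + code T + p)) (map (\<lambda>i. 2^i) (filter (\<lambda>i. i \<notin> T) [0..<12]))) = 1"
    unfolding P5_def by simp
  then have "length (filter (\<lambda>i. inB (4096 + code T + 2^i)) (filter (\<lambda>i. i \<notin> T) [0..<12])) = 1"
    by (simp add: filter_map o_def)
  then have "card (set (filter (\<lambda>i. inB (4096 + code T + 2^i)) (filter (\<lambda>i. i \<notin> T) [0..<12]))) = 1"
    by (subst distinct_card) auto
  moreover have "set (filter (\<lambda>i. inB (4096 + code T + 2^i)) (filter (\<lambda>i. i \<notin> T) [0..<12])) =
     {i. i < 12 \<and> i \<notin> T \<and> inB (4096 + code T + 2^i)}" by auto
  ultimately have "card {i. i < 12 \<and> i \<notin> T \<and> inB (4096 + code T + 2^i)} = Suc 0" by simp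
  then obtain i where I: "{i. i < 12 \<and> i \<notin> T \<and> inB (4096 + code T + 2^i)} = {i}"
    by (auto simp: card_1_singleton_iff)
  then have i: "i < 12" "i \<notin> T" "inB (4096 + code T + 2^i)" by auto
  show "\<exists>!b. b \<in> B0 \<and> T \<subseteq> b"
  proof (rule ex1I[of _ "insert i T"])
    have "code (insert i T) = 2^i + code T" using code_insert fin i by simp
    then show "insert i T \<in> B0 \<and> T \<subseteq> insert i T"
      using i T fin by (auto simp: B0_def add_ac)
  next
    fix b assume b: "b \<in> B0 \<and> T \<subseteq> b"
    then have b1: "b \<subseteq> {..<12}" "card b = 6" "inB (4096 + code b)" "T \<subseteq> b" by (auto simp: B0_def)
    have finb: "finite b" using b1(1) finite_subset by blast
    have "card (b - T) = 1" using b1 T card_Diff_subset[OF fin b1(4)] by simp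
    then obtain j where j: "b - T = {j}" by (auto simp: card_1_singleton_iff)
    then have bj: "b = insert j T" "j \<notin> T" using b1(4) by auto
    have "code b = 2^j + code T" using bj code_insert fin by simp
    then have "j \<in> {i. i < 12 \<and> i \<notin> T \<and> inB (4096 + code T + 2^i)}"
      using bj b1 by (auto simp: add_ac)
    then have "j = i" using I by auto
    then show "b = insert i T" using bj by simp
  qed
qed

lemma steiner_transport:
  assumes bij: "bij_betw f Q Q" and S: "steiner_system t k Q B"
  shows "steiner_system t k Q {b. b \<subseteq> Q \<and> f ` b \<in> B}"
proof -
  have inj: "inj_on f Q" and im: "f ` Q = Q" using bij by (auto simp: bij_betw_def)
  have fin: "finite Q" and blk: "\<forall>b\<in>B. b \<subseteq> Q \<and> card b = k"
    and uq: "\<forall>T. T \<subseteq> Q \<and> card T = t \<longrightarrow> (\<exists>!b. b \<in> B \<and> T \<subseteq> b)"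
    using S unfolding steiner_system_def by auto
  show ?thesis unfolding steiner_system_def
  proof (intro conjI ballI allI impI)
    show "finite Q" by fact
  next
    fix b assume "b \<in> {b. b \<subseteq> Q \<and> f ` b \<in> B}"
    then show "b \<subseteq> Q" by auto
  next
    fix b assume "b \<in> {b. b \<subseteq> Q \<and> f ` b \<in> B}"
    then have b: "b \<subseteq> Q" "f ` b \<in> B" by auto
    have "card (f ` b) = card b" using card_image[OF inj_on_subset[OF inj b(1)]] .
    then show "card b = k" using b blk by auto
  next
    fix T assume T': "T \<subseteq> Q \<and> card T = t"
    have T: "T \<subseteq> Q" "card T = t" using T' by auto
    have "card (f ` T) = card T" using card_image[OF inj_on_subset[OF inj T(1)]] .
    moreover have "f ` T \<subseteq> Q" using T(1) im by auto
    ultimately have fT: "f ` T \<subseteq> Q \<and> card (f ` T) = t" using T by simp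
    have ex: "\<exists>!b. b \<in> B \<and> f ` T \<subseteq> b" by (rule uq[rule_format, OF fT])
    then obtain b' where b'1: "b' \<in> B \<and> f ` T \<subseteq> b'" and u0: "\<forall>c. c \<in> B \<and> f ` T \<subseteq> c \<longrightarrow> c = b'"
      unfolding Ex1_def by blast
    have b': "b' \<in> B" "f ` T \<subseteq> b'" using b'1 by auto
    have u: "c = b'" if "c \<in> B" "f ` T \<subseteq> c" for c using u0 that by blast
    have "b' \<subseteq> Q" using blk b'(1) by blast
    then have "b' \<subseteq> f ` Q" using im by simp
    then obtain b where b: "b \<subseteq> Q" "b' = f ` b" by (rule subset_imageE)
    show "\<exists>!b. b \<in> {b. b \<subseteq> Q \<and> f ` b \<in> B} \<and> T \<subseteq> b"
    proof (rule ex1I[of _ b])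
      have "T \<subseteq> b"
      proof
        fix x assume x: "x \<in> T"
        then have "f x \<in> f ` b" using b' b by auto
        then obtain y where y: "y \<in> b" "f x = f y" by auto
        have "x = y" using inj y x T(1) b(1) by (auto simp: inj_on_def)
        then show "x \<in> b" using y by simp
      qed
      moreover have "f ` b \<in> B" using b b' by simp
      ultimately show "b \<in> {b. b \<subseteq> Q \<and> f ` b \<in> B} \<and> T \<subseteq> b" using b(1) by simp
    next
      fix c assume c: "c \<in> {b. b \<subseteq> Q \<and> f ` b \<in> B} \<and> T \<subseteq> c"
      then have c1: "c \<subseteq> Q" "f ` c \<in> B" "T \<subseteq> c" by auto
      have "f ` T \<subseteq> f ` c" using c1(3) by (rule image_mono)
      then have "f ` c = b'" using u c1(2) by blast
      then have "f ` c = f ` b" using b by simp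
      then show "c = b" using inj_on_image_eq_iff[OF inj c1(1) b(1)] by simp
    qed
  qed
qed

definition sysof :: "nat list \<Rightarrow> nat set set" where
  "sysof l = {b. b \<subseteq> {..<12} \<and> (\<lambda>x. l ! x) ` b \<in> B0}"

lemma taul_ok: "\<forall>l\<in>set taul. distinct l \<and> length l = 12 \<and> (\<forall>x\<in>set l. x < 12)"
  by (simp add: taul_def)

lemma taul_bij: "l \<in> set taul \<Longrightarrow> bij_betw (\<lambda>x. l ! x) {..<12} {..<12}"
proof -
  assume l: "l \<in> set taul"
  then have d: "distinct l" "length l = 12" "set l \<subseteq> {..<12}" using taul_ok by auto
  have "card (set l) = 12" using d distinct_card by metis
  then have "set l = {..<12}" using card_subset_eq[OF _ d(3)] by simp
  then show ?thesis using bij_betw_nth[OF d(1)] d(2) by simp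
qed

lemma sysof_steiner: "l \<in> set taul \<Longrightarrow> steiner_system 5 6 {..<12} (sysof l)"
  unfolding sysof_def by (rule steiner_transport[OF taul_bij B0_steiner])

lemma map2_zero: "length cs = length ws \<Longrightarrow> map2 (+) cs (map (\<lambda>w. 0::nat) ws) = cs"
proof (induction cs arbitrary: ws)
  case Nil then show ?case by simp
next
  case (Cons a cs) then show ?case by (cases ws) auto
qed

lemma map2_add: "length cs = length ws \<Longrightarrow>
  map2 (+) (map2 (+) cs (map f ws)) (map g ws) = map2 (+) cs (map (\<lambda>w. f w + g w) ws)" for cs :: "nat list"
proof (induction cs arbitrary: ws)
  case Nil then show ?case by simp
next
  case (Cons a cs) then show ?case by (cases ws) (auto simp: add.assoc)
qed

lemma run6: "length cs = length ws \<Longrightarrow>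
  run inc6 exc6 (map (\<lambda>i. map (\<lambda>w. w i) ws) (rev [0..<n])) T cs = map2 (+) cs (map (\<lambda>w. \<Sum>i\<in>T \<inter> {..<n}. w i) ws)"
proof (induction n arbitrary: cs)
  case 0 then show ?case by (simp add: map2_zero)
next
  case (Suc n)
  have e: "map (\<lambda>i. map (\<lambda>w. w i) ws) (rev [0..<Suc n]) = map (\<lambda>w. w n) ws # map (\<lambda>i. map (\<lambda>w. w i) ws) (rev [0..<n])" by simp
  have l: "length (map (\<lambda>i. map (\<lambda>w. w i) ws) (rev [0..<n])) = n" by simp
  show ?case
  proof (cases "n \<in> T")
    case True
    have "T \<inter> {..<Suc n} = insert n (T \<inter> {..<n})" using True by (auto simp: lessThan_Suc)
    then have s: "\<And>w. (\<Sum>i\<in>T \<inter> {..<Suc n}. w i) = w n + (\<Sum>i\<in>T \<inter> {..<n}. w i)" by simp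
    have len: "length (map2 (+) cs (map (\<lambda>w. w n) ws)) = length ws" using Suc.prems by simp
    show ?thesis unfolding e using True Suc.IH[OF len] Suc.prems by (simp add: l inc6_def s map2_add)
  next
    case False
    have "T \<inter> {..<Suc n} = T \<inter> {..<n}" using False by (auto simp: less_Suc_eq)
    then show ?thesis unfolding e using False Suc.IH Suc.prems by (simp add: l exc6_def)
  qed
qed

definition ws6 :: "(nat \<Rightarrow> nat) list" where "ws6 = map (\<lambda>l i. 2 ^ (l ! i)) taul"

lemma R6_eq: "RR12 = map (\<lambda>i. map (\<lambda>w. w i) ws6) (rev [0..<12])"
  by (simp add: RR0_def RR1_def RR2_def RR3_def RR4_def RR5_def RR6_def RR7_def RR8_def RR9_def RR10_def RR11_def RR12_def rw_defs ws6_def taul_def upt_rec)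

lemma rep14: "replicate 14 x = [x,x,x,x,x,x,x,x,x,x,x,x,x,x]"
  by (simp add: eval_nat_numeral)

lemma map2_rep: "map2 (+) (replicate (length xs) c) (map f xs) = map (\<lambda>x. c + f x) xs" for c :: nat
  by (induction xs) auto

lemma code_image: "l \<in> set taul \<Longrightarrow> K \<subseteq> {..<12} \<Longrightarrow> code ((\<lambda>x. l ! x) ` K) = (\<Sum>i\<in>K. 2 ^ (l ! i))"
proof -
  assume l: "l \<in> set taul" and K: "K \<subseteq> {..<12}"
  have "inj_on (\<lambda>x. l ! x) K" using taul_bij[OF l] K by (auto simp: bij_betw_def intro: inj_on_subset)
  then show ?thesis unfolding code_def by (simp add: sum.reindex)
qed

lemma mem_sysof: "l \<in> set taul \<Longrightarrow> K \<subseteq> {..<12} \<Longrightarrow> card K = 6 \<Longrightarrow>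
   K \<in> sysof l \<longleftrightarrow> inB (4096 + (\<Sum>i\<in>K. 2 ^ (l ! i)))"
proof -
  assume l: "l \<in> set taul" and K: "K \<subseteq> {..<12}" and c: "card K = 6"
  have bij: "bij_betw (\<lambda>x. l ! x) {..<12} {..<12}" using taul_bij[OF l] .
  have inj: "inj_on (\<lambda>x. l ! x) K" using bij K by (auto simp: bij_betw_def intro: inj_on_subset)
  have "(\<lambda>x. l ! x) ` K \<subseteq> {..<12}" using bij K by (auto simp: bij_betw_def)
  moreover have "card ((\<lambda>x. l ! x) ` K) = 6" using card_image[OF inj] c by simp
  ultimately show ?thesis using K code_image[OF l K] by (simp add: sysof_def B0_def)
qed

definition LL :: "nat set set multiset" where "LL = mset (map sysof taul)"

lemma LS_main: "large_set_mult 5 6 12 2 {..<12} LL"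
  unfolding large_set_mult_def
proof (intro conjI ballI allI impI)
  show "finite {..<12::nat}" by simp
  show "card {..<12::nat} = 12" by simp
next
  fix B assume "B \<in># LL"
  then obtain l where "l \<in> set taul" "B = sysof l" by (auto simp: LL_def)
  then show "steiner_system 5 6 {..<12} B" using sysof_steiner by simp
next
  fix K :: "nat set" assume K': "K \<subseteq> {..<12} \<and> card K = 6"
  have K: "K \<subseteq> {..<12}" "card K = 6" using K' by auto
  have lR: "length RR12 = 12" by (simp add: RR0_def RR1_def RR2_def RR3_def RR4_def RR5_def RR6_def RR7_def RR8_def RR9_def RR10_def RR11_def RR12_def)
  have lt: "length taul = 14" by (simp add: taul_def)
  have "P6 (run inc6 exc6 RR12 K [4096,4096,4096,4096,4096,4096,4096,4096,4096,4096,4096,4096,4096,4096])"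
    using comp6 K unfolding enum_correct lR by blast
  then have "P6 (run inc6 exc6 RR12 K (replicate 14 4096))" by (simp only: rep14)
  moreover have "K \<inter> {..<12} = K" using K by auto
  moreover have "length (replicate 14 (4096::nat)) = length ws6" by (simp add: ws6_def lt)
  ultimately have "length (filter inB (map2 (+) (replicate 14 4096) (map (\<lambda>w. \<Sum>i\<in>K. w i) ws6))) = 2"
    unfolding R6_eq P6_def by (simp add: run6)
  moreover have "replicate 14 (4096::nat) = replicate (length taul) 4096" by (simp add: lt)
  ultimately have "length (filter inB (map (\<lambda>l. 4096 + (\<Sum>i\<in>K. 2 ^ (l ! i))) taul)) = 2"
    by (simp add: ws6_def map2_rep o_def)
  then have "length (filter (\<lambda>l. inB (4096 + (\<Sum>i\<in>K. 2 ^ (l ! i)))) taul) = 2"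
    by (simp add: filter_map o_def)
  moreover have "filter (\<lambda>l. inB (4096 + (\<Sum>i\<in>K. 2 ^ (l ! i)))) taul = filter (\<lambda>l. K \<in> sysof l) taul"
    using mem_sysof K by (intro filter_cong) auto
  ultimately have "length (filter (\<lambda>l. K \<in> sysof l) taul) = 2" by simp
  moreover have "size (filter_mset (\<lambda>B. K \<in> B) LL) = size (filter_mset (\<lambda>l. K \<in> sysof l) (mset taul))"
    unfolding LL_def by (simp add: filter_mset_image_mset)
  moreover have "size (filter_mset (\<lambda>l. K \<in> sysof l) (mset taul)) = length (filter (\<lambda>l. K \<in> sysof l) taul)"
    by (metis mset_filter size_mset)
  ultimately show "size (filter_mset (\<lambda>B. K \<in> B) LL) = 2" by simp
qed

lemma derive_LS:
  assumes "LS_exists (Suc t) (Suc k) (Suc n) mu"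
  shows "LS_exists t k n mu"
proof -
  obtain L :: "nat set set multiset" where L: "large_set_mult (Suc t) (Suc k) (Suc n) mu {..<Suc n} L"
    using assms unfolding LS_exists_def by blast
  define der :: "nat set set \<Rightarrow> nat set set" where "der B = (\<lambda>b. b - {n}) ` {b\<in>B. n \<in> b}" for B
  have memder: "K \<in> der B \<longleftrightarrow> insert n K \<in> B" if "n \<notin> K" for K B
  proof
    assume "K \<in> der B"
    then obtain b where "b \<in> B" "n \<in> b" "K = b - {n}" by (auto simp: der_def)
    then have "insert n K = b" by auto
    then show "insert n K \<in> B" using \<open>b \<in> B\<close> by simp
  next
    assume "insert n K \<in> B"
    moreover have "K = insert n K - {n}" using that by auto
    ultimately show "K \<in> der B" unfolding der_def by blast
  qed
  have steiner_der: "steiner_system t k {..<n} (der B)" if S: "steiner_system (Suc t) (Suc k) {..<Suc n} B" for B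
  proof -
    have blk: "\<forall>b\<in>B. b \<subseteq> {..<Suc n} \<and> card b = Suc k"
      and uq: "\<forall>T. T \<subseteq> {..<Suc n} \<and> card T = Suc t \<longrightarrow> (\<exists>!b. b \<in> B \<and> T \<subseteq> b)"
      using S unfolding steiner_system_def by auto
    show ?thesis unfolding steiner_system_def
    proof (intro conjI ballI allI impI)
      show "finite {..<n}" by simp
    next
      fix d assume "d \<in> der B"
      then obtain b where b: "b \<in> B" "n \<in> b" "d = b - {n}" by (auto simp: der_def)
      have bs: "b \<subseteq> {..<Suc n}" using blk b(1) by blast
      show "d \<subseteq> {..<n}"
      proof
        fix x assume "x \<in> d"
        then have "x \<in> b" "x \<noteq> n" using b(3) by auto
        moreover have "x < Suc n" using bs \<open>x \<in> b\<close> by auto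
        ultimately show "x \<in> {..<n}" by simp
      qed
    next
      fix d assume "d \<in> der B"
      then obtain b where b: "b \<in> B" "n \<in> b" "d = b - {n}" by (auto simp: der_def)
      have fb: "finite b" using blk b(1) finite_subset by blast
      show "card d = k" using blk b fb by simp
    next
      fix T assume T': "T \<subseteq> {..<n} \<and> card T = t"
      have T: "T \<subseteq> {..<n}" "card T = t" "n \<notin> T" using T' by auto
      have fT: "finite T" using T(1) finite_subset by blast
      have "insert n T \<subseteq> {..<Suc n} \<and> card (insert n T) = Suc t" using T fT by auto
      then have ex: "\<exists>!b. b \<in> B \<and> insert n T \<subseteq> b" by (rule uq[rule_format])
      then obtain b where b1: "b \<in> B \<and> insert n T \<subseteq> b" and u0: "\<forall>c. c \<in> B \<and> insert n T \<subseteq> c \<longrightarrow> c = b"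
        unfolding Ex1_def by blast
      have b: "b \<in> B" "insert n T \<subseteq> b" using b1 by auto
      have u: "c = b" if "c \<in> B" "insert n T \<subseteq> c" for c using u0 that by blast
      show "\<exists>!d. d \<in> der B \<and> T \<subseteq> d"
      proof (rule ex1I[of _ "b - {n}"])
        show "b - {n} \<in> der B \<and> T \<subseteq> b - {n}" using b T unfolding der_def by auto
      next
        fix d assume d: "d \<in> der B \<and> T \<subseteq> d"
        then obtain c where c: "c \<in> B" "n \<in> c" "d = c - {n}" by (auto simp: der_def)
        then have "insert n T \<subseteq> c" using d by auto
        then have "c = b" using u c by blast
        then show "d = b - {n}" using c by simp
      qed
    qed
  qed
  have "large_set_mult t k n mu {..<n} (image_mset der L)"
    unfolding large_set_mult_def
  proof (intro conjI ballI allI impI)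
    show "finite {..<n}" by simp
    show "card {..<n} = n" by simp
  next
    fix D assume "D \<in># image_mset der L"
    then obtain B where "B \<in># L" "D = der B" by auto
    then show "steiner_system t k {..<n} D" using L steiner_der unfolding large_set_mult_def by blast
  next
    fix K assume K': "K \<subseteq> {..<n} \<and> card K = k"
    have K: "K \<subseteq> {..<n}" "card K = k" "n \<notin> K" using K' by auto
    have fK: "finite K" using K(1) finite_subset by blast
    have "insert n K \<subseteq> {..<Suc n} \<and> card (insert n K) = Suc k" using K fK by auto
    then have cnt: "size (filter_mset (\<lambda>B. insert n K \<in> B) L) = mu" using L unfolding large_set_mult_def by blast
    have "filter_mset (\<lambda>B. K \<in> B) (image_mset der L) = image_mset der (filter_mset (\<lambda>B. K \<in> der B) L)"
      by (simp add: filter_mset_image_mset)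
    moreover have "filter_mset (\<lambda>B. K \<in> der B) L = filter_mset (\<lambda>B. insert n K \<in> B) L"
      using memder[OF K(3)] by (intro filter_mset_cong) auto
    ultimately show "size (filter_mset (\<lambda>B. K \<in> B) (image_mset der L)) = mu" using cnt by simp
  qed
  then show ?thesis unfolding LS_exists_def by blast
qed

theorem lemma15:
  shows "LS_exists 4 5 11 2 \<and> LS_exists 3 4 10 2 \<and> LS_exists 5 6 12 2"
proof -
  have A: "LS_exists 5 6 12 2" unfolding LS_exists_def using LS_main by blast
  have B: "LS_exists 4 5 11 2" using derive_LS[of 4 5 11 2] A by (simp add: numeral_eq_Suc)
  have C: "LS_exists 3 4 10 2" using derive_LS[of 3 4 10 2] B by (simp add: numeral_eq_Suc)
  show ?thesis using A B C by blast
qed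
end
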